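(* In any execution of the algorithm described in the context, all non-faulty processes that decide decide the same value; i.e., no two non-faulty processes decide different values.
   Context: Model. There are $n$ processes $p_1,\dots,p_n$ ($i$ is the index of $p_i$) communicating over an asynchronous, reliable, point-to-point network: every pair of processes is connected by a channel, message delays are finite but unbounded, and the network does not lose, duplicate, modify or create messages. "Broadcast" means sending the message to every process (including oneself). Messages are signed with unforgeable digital signatures ($\langle m\rangle_j$ denotes message $m$ signed by $p_j$); malformed messages or messages with invalid signatures are ignored. Up to $t$ processes are Byzantine (faulty) and may behave arbitrarily and collude, but cannot forge signatures of other processes; the remaining processes are non-faulty and follow the algorithm. It is assumed that $t<n/3$. Algorithm. Messages are of the form $\mathrm{AUX}[r](v)$ with round $r\in\mathbb{N}$ and $v\in\{0,1\}$, sent as a pair $(\langle \mathrm{AUX}[r](v)\rangle_j,\mathit{proofs})$ where $\mathit{proofs}$ is a set of signed AUX messages. The predicate $\mathsf{is\_valid}(r,est,\mathit{proofs})$ is: if $r=0$ return true; if $r=1$ return true iff $\mathit{proofs}$ contains signed $\mathrm{AUX}[0](est)$ messages from $t+1$ different processes; otherwise let $b=(r-1)\bmod 2$; if $est=b$, return true iff ($r=2$ and $\mathit{proofs}$ contains signed $\mathrm{AUX}[0](b)$ from $t+1$ different processes) or ($\mathit{proofs}$ contains signed $\mathrm{AUX}[r-2](b)$ from $n-t$ different processes); if $est\neq b$, return true iff $\mathit{proofs}$ contains signed $\mathrm{AUX}[r-1](\neg b)$ from $n-t$ different processes. Each process $p_i$ with proposal $v_i$ keeps a round counter $r_i$, a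 set $\mathit{aux\_values}_i$ of signed AUX messages, and timers indexed by naturals (timers $2r$ and $2r+1$ belong to round $r$; starting an already started or expired timer does nothing). It sets $r_i:=0$, $\mathit{aux\_values}_i:=\emptyset$, broadcasts $(\langle\mathrm{AUX}[0](v_i)\rangle_i,\emptyset)$, then repeats forever: (1) $r_i:=r_i+1$; (2) if $i=r_i\bmod n$ (coordinator), run Broadcast; (3) start timer $2r_i$ and wait until it expires; (4) if $i\ne r_i\bmod n$, run Broadcast; (5) wait until $\mathit{aux\_values}_i$ contains round-$r_i$ AUX messages from $n-t$ different processes; (6) start timer $2r_i+1$ and wait until it expires; (7) with $b_i=r_i\bmod 2$, if $\mathit{aux\_values}_i$ contains $\mathrm{AUX}[r_i](b_i)$ from $n-t$ different processes, decide $b_i$ (if not yet decided); a process decides in round $r$ if it decides at this step with $r_i=r$. Broadcast: let $\mathit{values}_i$ be the set of $v\in\{0,1\}$ such that $\mathsf{is\_valid}(r_i,v,S)$ holds for some $S\subseteq\mathit{aux\_values}_i$; let $bv=(r_i+1)\bmod 2$; if $p_i$ received from $p_{r_i\bmod n}$ a message $(\langle\mathrm{AUX}[r_i](p)\rangle_{r_i\bmod n},\cdot)$ with $p\in\mathit{values}_i$ then $est_i:=p$, else if $bv\in\mathit{values}_i$ then $est_i:=bv$, else $est_i:=\neg bv$; choose $\mathit{proofs}\subseteq\mathit{aux\_values}_i$ with $\mathsf{is\_valid}(r_i,est_i,\mathit{proofs})$ and broadcast $(\langle\mathrm{AUX}[r_i](est_i)\rangle_i,\mathit{proofs})$. On receiving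 $(\langle\mathrm{AUX}[r_j](est_j)\rangle_j,\mathit{proofs})$: if $\mathsf{is\_valid}(r_j,est_j,\mathit{proofs})$, add the signed message and the messages of $\mathit{proofs}$ needed to satisfy the predicate to $\mathit{aux\_values}_i$ (such messages are called valid). Then let $\rho_i$ be the largest round for which $\mathit{aux\_values}_i$ contains messages from $t+1$ different processes, and set every timer with index $\le 2\rho_i$ to expired. *)

theory Defs
  imports Main "HOL-Library.Multiset"
begin

text \<open>A signed message AUX[r](v) signed by process signer.  Processes are 1..n,
  values are 0 and 1 (encoded as naturals).\<close>
datatype smsg = Aux (signer: nat) (rnd: nat) (val: nat)

text \<open>A network message: (channel sender, receiver, signed head, proofs).\<close>
type_synonym msg = "nat \<times> nat \<times> smsg \<times> smsg set"

definition neg :: "nat \<Rightarrow> nat" where "neg v = 1 - v"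

definition senders :: "smsg set \<Rightarrow> nat \<Rightarrow> nat \<Rightarrow> nat set" where
  "senders S r v = {j. Aux j r v \<in> S}"

definition round_senders :: "smsg set \<Rightarrow> nat \<Rightarrow> nat set" where
  "round_senders S r = {j. \<exists>v. Aux j r v \<in> S}"

definition is_valid :: "nat \<Rightarrow> nat \<Rightarrow> nat \<Rightarrow> nat \<Rightarrow> smsg set \<Rightarrow> bool" where
  "is_valid n t r est proofs =
     (if r = 0 then True
      else if r = 1 then card (senders proofs 0 est) \<ge> t + 1
      else (let b = (r - 1) mod 2 in
            if est = b then
              (r = 2 \<and> card (senders proofs 0 b) \<ge> t + 1) \<or>
              card (senders proofs (r - 2) b) \<ge> n - t
            else card (senders proofs (r - 1) (neg b)) \<ge> n - t))"

definition wf_smsg :: "nat \<Rightarrow> smsg \<Rightarrow> bool" where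
  "wf_smsg n m = (signer m \<in> {1..n} \<and> val m \<le> 1)"

datatype pcv = Init | Top | WaitT1 | WaitQ | WaitT2
datatype tst = Idle | Running | Expired

record lst =
  rr    :: nat
  aux   :: "smsg set"
  pc    :: pcv
  timer :: "nat \<Rightarrow> tst"
  rcvd  :: "(nat \<times> smsg) set"  \<comment> \<open>(channel sender, signed head) of every message received\<close>
  dec   :: "nat option"

record gst =
  loc :: "nat \<Rightarrow> lst"
  net :: "msg multiset"
  sgd :: "smsg set"            \<comment> \<open>messages signed so far by non-faulty processes\<close>

definition init_lst :: lst where
  "init_lst = \<lparr>rr = 0, aux = {}, pc = Init, timer = (\<lambda>_. Idle), rcvd = {}, dec = None\<rparr>"

definition init_gst :: gst where
  "init_gst = \<lparr>loc = (\<lambda>_. init_lst), net = {#}, sgd = {}\<rparr>"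

definition start_timer :: "nat \<Rightarrow> (nat \<Rightarrow> tst) \<Rightarrow> (nat \<Rightarrow> tst)" where
  "start_timer k tm = (if tm k = Idle then tm(k := Running) else tm)"

text \<open>Set to expired every timer with index \<le> 2 \<rho>, \<rho> the largest round for which
  aux contains messages from t+1 different processes (written without Max).\<close>
definition expire_timers :: "nat \<Rightarrow> smsg set \<Rightarrow> (nat \<Rightarrow> tst) \<Rightarrow> (nat \<Rightarrow> tst)" where
  "expire_timers t S tm =
     (\<lambda>k. if \<exists>r'. card (round_senders S r') \<ge> t + 1 \<and> k \<le> 2 * r' then Expired else tm k)"

definition vals :: "nat \<Rightarrow> nat \<Rightarrow> lst \<Rightarrow> nat set" where
  "vals n t s = {v. v \<le> 1 \<and> (\<exists>S \<subseteq> aux s. is_valid n t (rr s) v S)}"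

text \<open>Choice of est_i in procedure Broadcast.\<close>
definition est_ok :: "nat \<Rightarrow> nat \<Rightarrow> lst \<Rightarrow> nat \<Rightarrow> bool" where
  "est_ok n t s e =
     (let c = rr s mod n; bv = (rr s + 1) mod 2 in
      if \<exists>p. (c, Aux c (rr s) p) \<in> rcvd s \<and> p \<in> vals n t s
      then (c, Aux c (rr s) e) \<in> rcvd s \<and> e \<in> vals n t s
      else if bv \<in> vals n t s then e = bv else e = neg bv)"

definition bmsgs :: "nat \<Rightarrow> nat \<Rightarrow> smsg \<Rightarrow> smsg set \<Rightarrow> msg multiset" where
  "bmsgs n i m P = mset (map (\<lambda>k. (i, k, m, P)) [1..<Suc n])"

text \<open>Reachable global states, for n processes, resilience parameter t,
  set F of faulty processes and proposals v.\<close>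
inductive reachable :: "nat \<Rightarrow> nat \<Rightarrow> nat set \<Rightarrow> (nat \<Rightarrow> nat) \<Rightarrow> gst \<Rightarrow> bool"
  for n t F v where
  init: "reachable n t F v init_gst"
| start: "\<lbrakk> reachable n t F v s; i \<in> {1..n}; i \<notin> F; pc (loc s i) = Init \<rbrakk> \<Longrightarrow>
    reachable n t F v
      (s\<lparr> loc := (loc s)(i := (loc s i)\<lparr>rr := 0, aux := {}, pc := Top\<rparr>),
          net := net s + bmsgs n i (Aux i 0 (v i)) {},
          sgd := insert (Aux i 0 (v i)) (sgd s) \<rparr>)"
| top_coord: "\<lbrakk> reachable n t F v s; i \<in> {1..n}; i \<notin> F; pc (loc s i) = Top;
    ls = (loc s i)\<lparr>rr := Suc (rr (loc s i))\<rparr>; i = rr ls mod n;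
    est_ok n t ls e; P \<subseteq> aux ls; is_valid n t (rr ls) e P \<rbrakk> \<Longrightarrow>
    reachable n t F v
      (s\<lparr> loc := (loc s)(i := ls\<lparr>timer := start_timer (2 * rr ls) (timer ls), pc := WaitT1\<rparr>),
          net := net s + bmsgs n i (Aux i (rr ls) e) P,
          sgd := insert (Aux i (rr ls) e) (sgd s) \<rparr>)"
| top_other: "\<lbrakk> reachable n t F v s; i \<in> {1..n}; i \<notin> F; pc (loc s i) = Top;
    ls = (loc s i)\<lparr>rr := Suc (rr (loc s i))\<rparr>; i \<noteq> rr ls mod n \<rbrakk> \<Longrightarrow>
    reachable n t F v
      (s\<lparr> loc := (loc s)(i := ls\<lparr>timer := start_timer (2 * rr ls) (timer ls), pc := WaitT1\<rparr>) \<rparr>)"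
| t1_coord: "\<lbrakk> reachable n t F v s; i \<in> {1..n}; i \<notin> F; pc (loc s i) = WaitT1;
    ls = loc s i; timer ls (2 * rr ls) = Expired; i = rr ls mod n \<rbrakk> \<Longrightarrow>
    reachable n t F v (s\<lparr> loc := (loc s)(i := ls\<lparr>pc := WaitQ\<rparr>) \<rparr>)"
| t1_other: "\<lbrakk> reachable n t F v s; i \<in> {1..n}; i \<notin> F; pc (loc s i) = WaitT1;
    ls = loc s i; timer ls (2 * rr ls) = Expired; i \<noteq> rr ls mod n;
    est_ok n t ls e; P \<subseteq> aux ls; is_valid n t (rr ls) e P \<rbrakk> \<Longrightarrow>
    reachable n t F v
      (s\<lparr> loc := (loc s)(i := ls\<lparr>pc := WaitQ\<rparr>),
          net := net s + bmsgs n i (Aux i (rr ls) e) P,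
          sgd := insert (Aux i (rr ls) e) (sgd s) \<rparr>)"
| quorum: "\<lbrakk> reachable n t F v s; i \<in> {1..n}; i \<notin> F; pc (loc s i) = WaitQ;
    ls = loc s i; card (round_senders (aux ls) (rr ls)) \<ge> n - t \<rbrakk> \<Longrightarrow>
    reachable n t F v
      (s\<lparr> loc := (loc s)(i := ls\<lparr>timer := start_timer (2 * rr ls + 1) (timer ls), pc := WaitT2\<rparr>) \<rparr>)"
| decide: "\<lbrakk> reachable n t F v s; i \<in> {1..n}; i \<notin> F; pc (loc s i) = WaitT2;
    ls = loc s i; timer ls (2 * rr ls + 1) = Expired; b = rr ls mod 2 \<rbrakk> \<Longrightarrow>
    reachable n t F v
      (s\<lparr> loc := (loc s)(i := ls\<lparr>pc := Top,
             dec := (if dec ls = None \<and> card (senders (aux ls) (rr ls) b) \<ge> n - t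
                     then Some b else dec ls)\<rparr>) \<rparr>)"
| timeout: "\<lbrakk> reachable n t F v s; i \<in> {1..n}; i \<notin> F; timer (loc s i) k = Running \<rbrakk> \<Longrightarrow>
    reachable n t F v
      (s\<lparr> loc := (loc s)(i := (loc s i)\<lparr>timer := (timer (loc s i))(k := Expired)\<rparr>) \<rparr>)"
| receive: "\<lbrakk> reachable n t F v s; i \<in> {1..n}; i \<notin> F; (j, i, m, P) \<in># net s;
    ls = loc s i;
    A = (if is_valid n t (rnd m) (val m) P then {m} \<union> S else {});
    is_valid n t (rnd m) (val m) P \<longrightarrow> S \<subseteq> P \<and> is_valid n t (rnd m) (val m) S \<rbrakk> \<Longrightarrow>
    reachable n t F v
      (s\<lparr> loc := (loc s)(i := ls\<lparr>rcvd := insert (j, m) (rcvd ls), aux := aux ls \<union> A,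
             timer := expire_timers t (aux ls \<union> A) (timer ls)\<rparr>),
          net := net s - {#(j, i, m, P)#} \<rparr>)"
| byz_send: "\<lbrakk> reachable n t F v s; j \<in> F; k \<in> {1..n};
    wf_smsg n m; signer m \<in> F \<or> m \<in> sgd s; finite P;
    \<forall>x\<in>P. wf_smsg n x \<and> (signer x \<in> F \<or> x \<in> sgd s) \<rbrakk> \<Longrightarrow>
    reachable n t F v (s\<lparr> net := net s + {#(j, k, m, P)#} \<rparr>)"

end

theory Submission
  imports Defs
begin

lemma ar1: "(r'::nat) \<ge> 2 \<Longrightarrow> 1 - r mod 2 = (r' - 1) mod 2 \<Longrightarrow> r' mod 2 = r mod 2" by (auto simp: mod2_eq_if split: if_splits)
lemma ar2: "(r'::nat) mod 2 = r mod 2 \<Longrightarrow> r < r' \<Longrightarrow> 1 \<le> r \<Longrightarrow> r' \<noteq> 2 \<and> r \<le> r' - 2"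
proof -
  assume a: "r' mod 2 = r mod 2" "r < r'" "1 \<le> r"
  have "r' \<noteq> r + 1" using a(1) by (auto simp: mod2_eq_if split: if_splits)
  then show ?thesis using a by (auto simp: mod2_eq_if split: if_splits)
qed
lemma ar3: "(r'::nat) \<ge> 2 \<Longrightarrow> 1 - r mod 2 \<noteq> (r' - 1) mod 2 \<Longrightarrow> 1 - (r' - 1) mod 2 = 1 - r mod 2" by (auto simp: mod2_eq_if split: if_splits)
lemma ar4: "(b::nat) = r mod 2 \<Longrightarrow> b = 1 - b \<Longrightarrow> False" by (auto simp: mod2_eq_if split: if_splits)
lemma ar5: "(a::nat) = r1 mod 2 \<Longrightarrow> b = r2 mod 2 \<Longrightarrow> b \<noteq> 1 - a \<Longrightarrow> a = b" by (auto simp: mod2_eq_if split: if_splits)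

definition tr :: "nat \<Rightarrow> nat set \<Rightarrow> smsg set \<Rightarrow> smsg \<Rightarrow> bool" where
  "tr n F S x = (signer x \<in> {1..n} \<and> (signer x \<in> F \<or> x \<in> S))"

lemma tr_mono: "tr n F S x \<Longrightarrow> tr n F (insert y S) x"
  by (auto simp: tr_def)

lemma bmsgs_mem: "x \<in># bmsgs n i m P \<Longrightarrow> \<exists>k. x = (i,k,m,P)"
  by (auto simp: bmsgs_def)

lemma L1: "reachable n t F v s \<Longrightarrow> \<forall>m\<in>sgd s. signer m \<in> {1..n} \<and> signer m \<notin> F"
proof (induction rule: reachable.induct)
  case init
  then show ?case by (simp add: init_gst_def)
next
  case (start s i)
  then show ?case using start.hyps(2,3) start.IH by simp
next
  case (top_coord s i ls e P)
  show ?case using top_coord.hyps(2,3) top_coord.IH by simp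
next
  case (top_other s i ls)
  show ?case using top_other.IH by simp
next
  case (t1_coord s i ls)
  show ?case using t1_coord.IH by simp
next
  case (t1_other s i ls e P)
  show ?case using t1_other.hyps(2,3) t1_other.IH by simp
next
  case (quorum s i ls)
  show ?case using quorum.IH by simp
next
  case (decide s i ls b)
  show ?case using decide.IH by simp
next
  case (timeout s i k)
  show ?case using timeout.IH by simp
next
  case (receive s i j m P ls A S)
  show ?case using receive.IH by simp
next
  case (byz_send s j k m P)
  show ?case using byz_send.IH by simp
qed

lemma L2: "reachable n t F v s \<Longrightarrow>
  (\<forall>i\<in>{1..n}-F. \<forall>m\<in>aux (loc s i). tr n F (sgd s) m) \<and>
  (\<forall>x\<in>#net s. tr n F (sgd s) (fst (snd (snd x))) \<and> (\<forall>y\<in>snd (snd (snd x)). tr n F (sgd s) y))"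
proof (induction rule: reachable.induct)
  case init
  then show ?case by (simp add: init_gst_def init_lst_def)
next
  case (start s i)
  show ?case using start.hyps(2,3) start.IH by (auto simp: tr_def bmsgs_def)
next
  case (top_coord s i ls e P)
  have "\<forall>y\<in>aux ls. tr n F (sgd s) y" using top_coord.IH top_coord.hyps(2,3,5) by auto
  then have "\<forall>y\<in>P. tr n F (sgd s) y" using top_coord.hyps(8) by blast
  then show ?case using top_coord.hyps(2,3,5) top_coord.IH by (auto simp: tr_def bmsgs_def)
next
  case (top_other s i ls)
  show ?case using top_other.IH top_other.hyps(5) by simp
next
  case (t1_coord s i ls)
  show ?case using t1_coord.IH t1_coord.hyps(5) by simp
next
  case (t1_other s i ls e P)
  have "\<forall>y\<in>aux ls. tr n F (sgd s) y" using t1_other.IH t1_other.hyps(2,3,5) by auto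
  then have "\<forall>y\<in>P. tr n F (sgd s) y" using t1_other.hyps(9) by blast
  then show ?case using t1_other.hyps(2,3,5) t1_other.IH by (auto simp: tr_def bmsgs_def)
next
  case (quorum s i ls)
  show ?case using quorum.IH quorum.hyps(5) by simp
next
  case (decide s i ls b)
  show ?case using decide.IH decide.hyps(5) by simp
next
  case (timeout s i k)
  show ?case using timeout.IH by simp
next
  case (receive s i j m P ls A S)
  have msg: "tr n F (sgd s) m \<and> (\<forall>y\<in>P. tr n F (sgd s) y)" using receive.IH receive.hyps(4) by fastforce
  have Aok: "\<forall>y\<in>A. tr n F (sgd s) y" using receive.hyps(6,7) msg by auto
  show ?case using receive.IH receive.hyps(5) Aok by (auto dest: in_diffD)
next
  case (byz_send s j k m P)
  show ?case using byz_send.IH byz_send.hyps(4,5,7) by (auto simp: tr_def wf_smsg_def)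
qed

lemma L3_step:
  assumes "\<forall>m\<in>S. \<exists>P. is_valid n t (rnd m) (val m) P \<and> (\<forall>y\<in>P. tr n F S y)"
    and "is_valid n t (rnd x) (val x) Q" and "\<forall>y\<in>Q. tr n F S y"
  shows "\<forall>m\<in>insert x S. \<exists>P. is_valid n t (rnd m) (val m) P \<and> (\<forall>y\<in>P. tr n F (insert x S) y)"
proof
  fix m assume m: "m \<in> insert x S"
  show "\<exists>P. is_valid n t (rnd m) (val m) P \<and> (\<forall>y\<in>P. tr n F (insert x S) y)"
  proof (cases "m = x")
    case True
    then show ?thesis using assms(2,3) tr_mono by blast
  next
    case False
    then have "m \<in> S" using m by simp
    then obtain P where "is_valid n t (rnd m) (val m) P" "\<forall>y\<in>P. tr n F S y" using assms(1) by blast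
    then show ?thesis using tr_mono by blast
  qed
qed

lemma L3: "reachable n t F v s \<Longrightarrow>
  \<forall>m\<in>sgd s. \<exists>P. is_valid n t (rnd m) (val m) P \<and> (\<forall>y\<in>P. tr n F (sgd s) y)"
proof (induction rule: reachable.induct)
  case init
  then show ?case by (simp add: init_gst_def)
next
  case (start s i)
  have "is_valid n t (rnd (Aux i 0 (v i))) (val (Aux i 0 (v i))) {}" by (simp add: is_valid_def)
  then show ?case using L3_step[OF start.IH, of "Aux i 0 (v i)" "{}"] by simp
next
  case (top_coord s i ls e P)
  have "\<forall>y\<in>aux ls. tr n F (sgd s) y" using L2[OF top_coord.hyps(1)] top_coord.hyps(2,3,5) by auto
  then have "\<forall>y\<in>P. tr n F (sgd s) y" using top_coord.hyps(8) by blast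
  then show ?case using L3_step[OF top_coord.IH, of "Aux i (rr ls) e" P] top_coord.hyps(9) by simp
next
  case (top_other s i ls)
  show ?case using top_other.IH by simp
next
  case (t1_coord s i ls)
  show ?case using t1_coord.IH by simp
next
  case (t1_other s i ls e P)
  have "\<forall>y\<in>aux ls. tr n F (sgd s) y" using L2[OF t1_other.hyps(1)] t1_other.hyps(2,3,5) by auto
  then have "\<forall>y\<in>P. tr n F (sgd s) y" using t1_other.hyps(9) by blast
  then show ?case using L3_step[OF t1_other.IH, of "Aux i (rr ls) e" P] t1_other.hyps(10) by simp
next
  case (quorum s i ls)
  show ?case using quorum.IH by simp
next
  case (decide s i ls b)
  show ?case using decide.IH by simp
next
  case (timeout s i k)
  show ?case using timeout.IH by simp
next
  case (receive s i j m P ls A S)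
  show ?case using receive.IH by simp
next
  case (byz_send s j k m P)
  show ?case using byz_send.IH by simp
qed

lemma sel:
  "loc (s\<lparr>loc := X, net := Y, sgd := Z\<rparr>) = X" "sgd (s\<lparr>loc := X, net := Y, sgd := Z\<rparr>) = Z"
  "loc (s\<lparr>loc := X, net := Y\<rparr>) = X" "sgd (s\<lparr>loc := X, net := Y\<rparr>) = sgd s"
  "loc (s\<lparr>loc := X\<rparr>) = X" "sgd (s\<lparr>loc := X\<rparr>) = sgd s"
  "loc (s\<lparr>net := Y\<rparr>) = loc s" "sgd (s\<lparr>net := Y\<rparr>) = sgd s"
  by simp_all

definition inv1 :: "nat \<Rightarrow> (nat \<Rightarrow> lst) \<Rightarrow> smsg set \<Rightarrow> bool" where
  "inv1 n L S = (\<forall>m\<in>S. pc (L (signer m)) \<noteq> Init \<and> rnd m \<le> rr (L (signer m)) \<and>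
      (pc (L (signer m)) = WaitT1 \<and> signer m \<noteq> rr (L (signer m)) mod n \<longrightarrow> rnd m < rr (L (signer m))))"

definition inv2 :: "nat \<Rightarrow> nat set \<Rightarrow> (nat \<Rightarrow> lst) \<Rightarrow> bool" where
  "inv2 n F L = (\<forall>i\<in>{1..n}-F. pc (L i) \<in> {WaitT1, WaitQ, WaitT2} \<longrightarrow> 1 \<le> rr (L i))"

definition uniq :: "smsg set \<Rightarrow> bool" where
  "uniq S = (\<forall>m1\<in>S. \<forall>m2\<in>S. signer m1 = signer m2 \<longrightarrow> rnd m1 = rnd m2 \<longrightarrow> val m1 = val m2)"

lemma inv1_D: "inv1 n L S \<Longrightarrow> m \<in> S \<Longrightarrow> pc (L (signer m)) \<noteq> Init \<and> rnd m \<le> rr (L (signer m)) \<and>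
      (pc (L (signer m)) = WaitT1 \<and> signer m \<noteq> rr (L (signer m)) mod n \<longrightarrow> rnd m < rr (L (signer m)))"
  unfolding inv1_def by blast

lemma inv1_upd: "inv1 n L S \<Longrightarrow> (\<And>m. m \<in> S \<Longrightarrow> signer m = i \<Longrightarrow> pc l' \<noteq> Init \<and> rnd m \<le> rr l' \<and>
   (pc l' = WaitT1 \<and> i \<noteq> rr l' mod n \<longrightarrow> rnd m < rr l')) \<Longrightarrow> inv1 n (L(i := l')) S"
  unfolding inv1_def by auto

lemma inv1_ins: "inv1 n L S \<Longrightarrow> pc (L (signer x)) \<noteq> Init \<Longrightarrow> rnd x \<le> rr (L (signer x)) \<Longrightarrow>
   (pc (L (signer x)) = WaitT1 \<and> signer x \<noteq> rr (L (signer x)) mod n \<longrightarrow> rnd x < rr (L (signer x))) \<Longrightarrow>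
   inv1 n L (insert x S)"
  unfolding inv1_def by blast

lemma inv2_D: "inv2 n F L \<Longrightarrow> i \<in> {1..n}-F \<Longrightarrow> pc (L i) \<in> {WaitT1, WaitQ, WaitT2} \<Longrightarrow> 1 \<le> rr (L i)"
  unfolding inv2_def by blast

lemma inv2_upd: "inv2 n F L \<Longrightarrow> (pc l' \<in> {WaitT1, WaitQ, WaitT2} \<longrightarrow> 1 \<le> rr l') \<Longrightarrow> inv2 n F (L(i := l'))"
  unfolding inv2_def by auto

lemma uniq_ins2:
  assumes "uniq S" and "\<forall>m\<in>S. signer m = signer x \<longrightarrow> rnd m \<noteq> rnd x"
  shows "uniq (insert x S)"
  unfolding uniq_def
proof (intro ballI impI)
  fix m1 m2 assume h: "m1 \<in> insert x S" "m2 \<in> insert x S" "signer m1 = signer m2" "rnd m1 = rnd m2"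
  show "val m1 = val m2"
  proof (cases "m1 = x")
    case True
    then show ?thesis using h assms(2) by (metis insert_iff)
  next
    case False
    then show ?thesis using h assms unfolding uniq_def by (metis insert_iff)
  qed
qed

lemma L4': "reachable n t F v s \<Longrightarrow> inv1 n (loc s) (sgd s) \<and> inv2 n F (loc s) \<and> uniq (sgd s)"
proof (induction rule: reachable.induct)
  case init
  then show ?case by (simp add: init_gst_def init_lst_def inv1_def inv2_def uniq_def)
next
  case (start s i)
  note I = start.IH
  let ?l = "(loc s i)\<lparr>rr := 0, aux := {}, pc := Top\<rparr>"
  let ?x = "Aux i 0 (v i)"
  have no: "\<forall>m\<in>sgd s. signer m \<noteq> i" using inv1_D[OF conjunct1[OF I]] start.hyps(4) by metis
  have a: "inv1 n ((loc s)(i := ?l)) (sgd s)" by (rule inv1_upd[OF conjunct1[OF I]]) (use no in blast)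
  have b: "inv1 n ((loc s)(i := ?l)) (insert ?x (sgd s))" by (rule inv1_ins[OF a]) simp_all
  have c: "inv2 n F ((loc s)(i := ?l))" by (rule inv2_upd) (use I in simp_all)
  have d: "uniq (insert ?x (sgd s))" by (rule uniq_ins2) (use I no in simp_all)
  show ?case unfolding sel using b c d by blast
next
  case (top_coord s i ls e P)
  note I = top_coord.IH
  let ?l = "ls\<lparr>timer := start_timer (2 * rr ls) (timer ls), pc := WaitT1\<rparr>"
  let ?x = "Aux i (rr ls) e"
  have r: "rr ls = Suc (rr (loc s i))" using top_coord.hyps(5) by simp
  have l: "pc ?l = WaitT1" "rr ?l = rr ls" by simp_all
  have co: "i = rr ?l mod n" using top_coord.hyps(6) by simp
  have old: "rnd m < rr ls" if "m \<in> sgd s" "signer m = i" for m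
    using inv1_D[OF conjunct1[OF I] that(1)] that(2) r by simp
  have a: "inv1 n ((loc s)(i := ?l)) (sgd s)"
    by (rule inv1_upd[OF conjunct1[OF I]]) (use old l in fastforce)
  have b: "inv1 n ((loc s)(i := ?l)) (insert ?x (sgd s))" by (rule inv1_ins[OF a]) (use l co in simp_all)
  have c: "inv2 n F ((loc s)(i := ?l))" by (rule inv2_upd) (use I r in simp_all)
  have d: "uniq (insert ?x (sgd s))" by (rule uniq_ins2) (use I old in fastforce)+
  show ?case unfolding sel using b c d by blast
next
  case (top_other s i ls)
  note I = top_other.IH
  let ?l = "ls\<lparr>timer := start_timer (2 * rr ls) (timer ls), pc := WaitT1\<rparr>"
  have r: "rr ls = Suc (rr (loc s i))" using top_other.hyps(5) by simp
  have l: "pc ?l = WaitT1" "rr ?l = rr ls" by simp_all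
  have old: "rnd m < rr ls" if "m \<in> sgd s" "signer m = i" for m
    using inv1_D[OF conjunct1[OF I] that(1)] that(2) r by simp
  have a: "inv1 n ((loc s)(i := ?l)) (sgd s)"
    by (rule inv1_upd[OF conjunct1[OF I]]) (use old l in fastforce)
  have c: "inv2 n F ((loc s)(i := ?l))" by (rule inv2_upd) (use I r in simp_all)
  show ?case unfolding sel using a c I by blast
next
  case (t1_coord s i ls)
  note I = t1_coord.IH
  let ?l = "ls\<lparr>pc := WaitQ\<rparr>"
  have r: "rr ?l = rr (loc s i)" "pc ?l = WaitQ" using t1_coord.hyps(5) by simp_all
  have a: "inv1 n ((loc s)(i := ?l)) (sgd s)"
    by (rule inv1_upd[OF conjunct1[OF I]]) (use inv1_D[OF conjunct1[OF I]] r in fastforce)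
  have "1 \<le> rr (loc s i)" using inv2_D[OF conjunct1[OF conjunct2[OF I]]] t1_coord.hyps(2,3,4) by simp
  then have c: "inv2 n F ((loc s)(i := ?l))" by (intro inv2_upd) (use I r in simp_all)
  show ?case unfolding sel using a c I by blast
next
  case (t1_other s i ls e P)
  note I = t1_other.IH
  let ?l = "ls\<lparr>pc := WaitQ\<rparr>"
  let ?x = "Aux i (rr ls) e"
  have r: "rr ?l = rr (loc s i)" "pc ?l = WaitQ" "rr ls = rr (loc s i)" using t1_other.hyps(5) by simp_all
  have old: "rnd m < rr ls" if "m \<in> sgd s" "signer m = i" for m
    using inv1_D[OF conjunct1[OF I] that(1)] that(2) r t1_other.hyps(4,5,7) by auto
  have a: "inv1 n ((loc s)(i := ?l)) (sgd s)"
    by (rule inv1_upd[OF conjunct1[OF I]]) (use inv1_D[OF conjunct1[OF I]] r in fastforce)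
  have b: "inv1 n ((loc s)(i := ?l)) (insert ?x (sgd s))" by (rule inv1_ins[OF a]) (use r in simp_all)
  have "1 \<le> rr (loc s i)" using inv2_D[OF conjunct1[OF conjunct2[OF I]]] t1_other.hyps(2,3,4) by simp
  then have c: "inv2 n F ((loc s)(i := ?l))" by (intro inv2_upd) (use I r in simp_all)
  have d: "uniq (insert ?x (sgd s))" by (rule uniq_ins2) (use I old in fastforce)+
  show ?case unfolding sel using b c d by blast
next
  case (quorum s i ls)
  note I = quorum.IH
  let ?l = "ls\<lparr>timer := start_timer (2 * rr ls + 1) (timer ls), pc := WaitT2\<rparr>"
  have r: "rr ?l = rr (loc s i)" "pc ?l = WaitT2" using quorum.hyps(5) by simp_all
  have a: "inv1 n ((loc s)(i := ?l)) (sgd s)"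
    by (rule inv1_upd[OF conjunct1[OF I]]) (use inv1_D[OF conjunct1[OF I]] r in fastforce)
  have "1 \<le> rr (loc s i)" using inv2_D[OF conjunct1[OF conjunct2[OF I]]] quorum.hyps(2,3,4) by simp
  then have c: "inv2 n F ((loc s)(i := ?l))" by (intro inv2_upd) (use I r in simp_all)
  show ?case unfolding sel using a c I by blast
next
  case (decide s i ls b)
  note I = decide.IH
  let ?l = "ls\<lparr>pc := Top, dec := (if dec ls = None \<and> card (senders (aux ls) (rr ls) b) \<ge> n - t then Some b else dec ls)\<rparr>"
  have r: "rr ?l = rr (loc s i)" "pc ?l = Top" using decide.hyps(5) by simp_all
  have a: "inv1 n ((loc s)(i := ?l)) (sgd s)"
    by (rule inv1_upd[OF conjunct1[OF I]]) (use inv1_D[OF conjunct1[OF I]] r in fastforce)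
  have c: "inv2 n F ((loc s)(i := ?l))" by (intro inv2_upd) (use I r in simp_all)
  show ?case unfolding sel using a c I by blast
next
  case (timeout s i k)
  note I = timeout.IH
  let ?l = "(loc s i)\<lparr>timer := (timer (loc s i))(k := Expired)\<rparr>"
  have r: "rr ?l = rr (loc s i)" "pc ?l = pc (loc s i)" by simp_all
  have a: "inv1 n ((loc s)(i := ?l)) (sgd s)"
    by (rule inv1_upd[OF conjunct1[OF I]]) (use inv1_D[OF conjunct1[OF I]] r in fastforce)
  have c: "inv2 n F ((loc s)(i := ?l))"
    by (rule inv2_upd[OF conjunct1[OF conjunct2[OF I]]]) (use inv2_D[OF conjunct1[OF conjunct2[OF I]]] timeout.hyps(2,3) r in simp)
  show ?case unfolding sel using a c I by blast
next
  case (receive s i j m P ls A S)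
  note I = receive.IH
  let ?l = "ls\<lparr>rcvd := insert (j, m) (rcvd ls), aux := aux ls \<union> A,
             timer := expire_timers t (aux ls \<union> A) (timer ls)\<rparr>"
  have r: "rr ?l = rr (loc s i)" "pc ?l = pc (loc s i)" using receive.hyps(5) by simp_all
  have a: "inv1 n ((loc s)(i := ?l)) (sgd s)"
    by (rule inv1_upd[OF conjunct1[OF I]]) (use inv1_D[OF conjunct1[OF I]] r in fastforce)
  have c: "inv2 n F ((loc s)(i := ?l))"
    by (rule inv2_upd[OF conjunct1[OF conjunct2[OF I]]]) (use inv2_D[OF conjunct1[OF conjunct2[OF I]]] receive.hyps(2,3) r in simp)
  show ?case unfolding sel using a c I by blast
next
  case (byz_send s j k m P)
  show ?case unfolding sel using byz_send.IH by blast
qed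

lemma L4: "reachable n t F v s \<Longrightarrow>
  (\<forall>m\<in>sgd s. pc (loc s (signer m)) \<noteq> Init \<and> rnd m \<le> rr (loc s (signer m)) \<and>
      (pc (loc s (signer m)) = WaitT1 \<and> signer m \<noteq> rr (loc s (signer m)) mod n \<longrightarrow> rnd m < rr (loc s (signer m)))) \<and>
  (\<forall>i\<in>{1..n}-F. pc (loc s i) \<in> {WaitT1, WaitQ, WaitT2} \<longrightarrow> 1 \<le> rr (loc s i)) \<and>
  (\<forall>m1\<in>sgd s. \<forall>m2\<in>sgd s. signer m1 = signer m2 \<longrightarrow> rnd m1 = rnd m2 \<longrightarrow> val m1 = val m2)"
  using L4'[of n t F v s] unfolding inv1_def inv2_def uniq_def by blast

definition decinv :: "nat \<Rightarrow> nat \<Rightarrow> nat set \<Rightarrow> smsg set \<Rightarrow> nat \<Rightarrow> bool" where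
  "decinv n t F S b = (\<exists>r A. 1 \<le> r \<and> b = r mod 2 \<and> A \<subseteq> {1..n} \<and> n - t \<le> card A \<and>
      (\<forall>k\<in>A. tr n F S (Aux k r b)))"

lemma decinv_mono: "decinv n t F S b \<Longrightarrow> decinv n t F (insert x S) b"
proof -
  assume "decinv n t F S b"
  then obtain r A where h: "1 \<le> r" "b = r mod 2" "A \<subseteq> {1..n}" "n - t \<le> card A"
      "\<forall>k\<in>A. tr n F S (Aux k r b)" unfolding decinv_def by blast
  then have "\<forall>k\<in>A. tr n F (insert x S) (Aux k r b)" using tr_mono by blast
  then show ?thesis unfolding decinv_def using h by blast
qed

lemma L5: "reachable n t F v s \<Longrightarrow>
  \<forall>i\<in>{1..n}-F. \<forall>b. dec (loc s i) = Some b \<longrightarrow> decinv n t F (sgd s) b"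
proof (induction rule: reachable.induct)
  case init
  then show ?case by (simp add: init_gst_def init_lst_def)
next
  case (start s i)
  show ?case using start.IH decinv_mono by simp
next
  case (top_coord s i ls e P)
  show ?case using top_coord.IH top_coord.hyps(5) decinv_mono by simp
next
  case (top_other s i ls)
  show ?case using top_other.IH top_other.hyps(5) by simp
next
  case (t1_coord s i ls)
  show ?case using t1_coord.IH t1_coord.hyps(5) by simp
next
  case (t1_other s i ls e P)
  show ?case using t1_other.IH t1_other.hyps(5) decinv_mono by simp
next
  case (quorum s i ls)
  show ?case using quorum.IH quorum.hyps(5) by simp
next
  case (decide s i ls b)
  have r1: "1 \<le> rr ls" using L4[OF decide.hyps(1)] decide.hyps(2,3,4,5) by auto
  have trA: "\<forall>y\<in>aux ls. tr n F (sgd s) y" using L2[OF decide.hyps(1)] decide.hyps(2,3,5) by auto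
  have new: "decinv n t F (sgd s) b" if "n - t \<le> card (senders (aux ls) (rr ls) b)"
  proof -
    have sub: "senders (aux ls) (rr ls) b \<subseteq> {1..n}"
      using trA by (auto simp: senders_def tr_def)
    have "\<forall>k\<in>senders (aux ls) (rr ls) b. tr n F (sgd s) (Aux k (rr ls) b)"
      using trA by (auto simp: senders_def)
    then show ?thesis unfolding decinv_def using r1 decide.hyps(7) sub that by blast
  qed
  show ?case using decide.IH decide.hyps(5) new by auto
next
  case (timeout s i k)
  show ?case using timeout.IH by simp
next
  case (receive s i j m P ls A S)
  show ?case using receive.IH receive.hyps(5) by simp
next
  case (byz_send s j k m P)
  show ?case using byz_send.IH by simp
qed

lemma inter_nonF:
  assumes "A \<subseteq> {1..n}" "B \<subseteq> {1..n}" "n - t \<le> card A" "n - t \<le> card B"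
    and "F \<subseteq> {1..n}" "card F \<le> t" "3 * t < n"
  shows "\<exists>k\<in>A \<inter> B. k \<notin> F"
proof (rule ccontr)
  assume "\<not> ?thesis"
  then have sub: "A \<inter> B \<subseteq> F" by blast
  have fA: "finite A" "finite B" "finite F" using assms(1,2,5) finite_subset by blast+
  have "card (A \<union> B) \<le> n" using assms(1,2) card_mono[of "{1..n}" "A \<union> B"] by auto
  moreover have "card A + card B = card (A \<union> B) + card (A \<inter> B)" using fA card_Un_Int by blast
  moreover have "card (A \<inter> B) \<le> card F" using sub fA card_mono by blast
  ultimately show False using assms(3,4,6,7) by linarith
qed

lemma nonF:
  assumes "B \<subseteq> {1..n}" "n - t \<le> card B"
    and "F \<subseteq> {1..n}" "card F \<le> t" "3 * t < n"
  shows "\<exists>k\<in>B. k \<notin> F"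
  using inter_nonF[OF assms(1,1,2,2,3,4,5)] by blast

lemma main:
  assumes N: "3 * t < n" "F \<subseteq> {1..n}" "card F \<le> t"
    and H1: "\<forall>m\<in>S. signer m \<in> {1..n} \<and> signer m \<notin> F"
    and H3: "\<forall>m\<in>S. \<exists>P. is_valid n t (rnd m) (val m) P \<and> (\<forall>y\<in>P. tr n F S y)"
    and HU: "\<forall>m1\<in>S. \<forall>m2\<in>S. signer m1 = signer m2 \<longrightarrow> rnd m1 = rnd m2 \<longrightarrow> val m1 = val m2"
    and D: "1 \<le> r" "b = r mod 2" "A \<subseteq> {1..n}" "n - t \<le> card A" "\<forall>k\<in>A. tr n F S (Aux k r b)"
  shows "r < r' \<Longrightarrow> m \<in> S \<Longrightarrow> rnd m = r' \<Longrightarrow> val m \<noteq> neg b"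
proof (induction r' arbitrary: m rule: less_induct)
  case (less r')
  show ?case
  proof
    assume vm: "val m = neg b"
    obtain P where P: "is_valid n t r' (neg b) P" "\<forall>y\<in>P. tr n F S y"
      using H3 less.prems(2,3) vm by metis
    have key: False if r2: "r \<le> r2" "r2 < r'" and cB: "n - t \<le> card (senders P r2 (neg b))" for r2
    proof -
      define B where "B = senders P r2 (neg b)"
      have Bsub: "B \<subseteq> {1..n}" using P(2) by (auto simp: B_def senders_def tr_def)
      have Btr: "\<forall>k\<in>B. tr n F S (Aux k r2 (neg b))" using P(2) by (auto simp: B_def senders_def)
      show False
      proof (cases "r2 = r")
        case True
        obtain k where k: "k \<in> A" "k \<in> B" "k \<notin> F"
          using inter_nonF[OF D(3) Bsub D(4) cB[folded B_def] N(2,3,1)] by blast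
        have "Aux k r b \<in> S" using D(5) k by (auto simp: tr_def)
        moreover have "Aux k r (neg b) \<in> S" using Btr k True by (auto simp: tr_def)
        ultimately have "b = neg b" using HU by fastforce
        then show False using ar4[OF D(2)] by (simp add: neg_def)
      next
        case False
        obtain k where k: "k \<in> B" "k \<notin> F"
          using nonF[OF Bsub cB[folded B_def] N(2,3,1)] by blast
        have "Aux k r2 (neg b) \<in> S" using Btr k by (auto simp: tr_def)
        then show False using less.IH[OF r2(2)] False r2(1) by fastforce
      qed
    qed
    have r'2: "r' \<ge> 2" using less.prems(1) D(1) by linarith
    show False
    proof (cases "neg b = (r' - 1) mod 2")
      case True
      have par: "r' mod 2 = r mod 2" using ar1[OF r'2] True D(2) by (simp add: neg_def)
      then have "r' \<noteq> 2" "r \<le> r' - 2" using ar2 less.prems(1) D(1) by blast+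
      then have "n - t \<le> card (senders P (r' - 2) (neg b))"
        using P(1) r'2 True by (auto simp: is_valid_def Let_def)
      then show False using key[of "r' - 2"] \<open>r \<le> r' - 2\<close> r'2 by linarith
    next
      case False
      have nb: "neg ((r' - 1) mod 2) = neg b" using ar3[OF r'2] False D(2) by (simp add: neg_def)
      have "n - t \<le> card (senders P (r' - 1) (neg ((r' - 1) mod 2)))"
        using P(1) r'2 False by (auto simp: is_valid_def Let_def)
      then have c2: "n - t \<le> card (senders P (r' - 1) (neg b))" using nb by simp
      have "r \<le> r' - 1" "r' - 1 < r'" using less.prems(1) r'2 by linarith+
      then show False using key c2 by blast
    qed
  qed
qed

lemma one_side:
  assumes N: "3 * t < n" "F \<subseteq> {1..n}" "card F \<le> t"
    and R: "reachable n t F v s"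
    and Da: "1 \<le> r1" "a = r1 mod 2" "A1 \<subseteq> {1..n}" "n - t \<le> card A1" "\<forall>k\<in>A1. tr n F (sgd s) (Aux k r1 a)"
    and Db: "b = r2 mod 2" "A2 \<subseteq> {1..n}" "n - t \<le> card A2" "\<forall>k\<in>A2. tr n F (sgd s) (Aux k r2 b)"
    and lt: "r1 < r2"
  shows "a = b"
proof -
  obtain k where k: "k \<in> A2" "k \<notin> F" using nonF[OF Db(2,3) N(2,3,1)] by blast
  have m: "Aux k r2 b \<in> sgd s" using Db(4) k by (auto simp: tr_def)
  have "val (Aux k r2 b) \<noteq> neg a"
    using main[OF N L1[OF R] L3[OF R] conjunct2[OF conjunct2[OF L4[OF R]]] Da lt m] by simp
  then show ?thesis using ar5[OF Da(2) Db(1)] by (simp add: neg_def)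
qed

theorem lemma3:
  fixes n t :: nat and F :: "nat set" and v :: "nat \<Rightarrow> nat" and s :: gst
  assumes "3 * t < n"
    and "F \<subseteq> {1..n}" and "card F \<le> t"
    and "\<forall>i\<in>{1..n} - F. v i \<le> 1"
    and "reachable n t F v s"
    and "i \<in> {1..n} - F" and "j \<in> {1..n} - F"
    and "dec (loc s i) = Some a" and "dec (loc s j) = Some b"
  shows "a = b"
proof -
  have "decinv n t F (sgd s) a" using L5[OF assms(5)] assms(6,8) by blast
  then obtain r1 A1 where A: "1 \<le> r1" "a = r1 mod 2" "A1 \<subseteq> {1..n}" "n - t \<le> card A1"
     "\<forall>k\<in>A1. tr n F (sgd s) (Aux k r1 a)" unfolding decinv_def by blast
  have "decinv n t F (sgd s) b" using L5[OF assms(5)] assms(7,9) by blast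
  then obtain r2 A2 where B: "1 \<le> r2" "b = r2 mod 2" "A2 \<subseteq> {1..n}" "n - t \<le> card A2"
     "\<forall>k\<in>A2. tr n F (sgd s) (Aux k r2 b)" unfolding decinv_def by blast
  consider "r1 = r2" | "r1 < r2" | "r2 < r1" by linarith
  then show ?thesis
  proof cases
    case 1
    then show ?thesis using A(2) B(2) by simp
  next
    case 2
    show ?thesis using one_side[OF assms(1,2,3,5) A B(2-5) 2] .
  next
    case 3
    show ?thesis using one_side[OF assms(1,2,3,5) B A(2-5) 3] by simp
  qed
qed

end
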